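(* Fix $P>0$ and $s>0$. For each integer $n\ge 2$, define the probability density on $[-1,1]$ \[ f_{U|\mathcal{E}}(u)=\frac{1}{F_n}(1-u^2)^{(n-3)/2}\exp\big(n\sqrt{Ps}\,u\big)\,\mathbf{1}\{u\in[-1,1]\},\qquad F_n=\int_{-1}^1(1-u^2)^{(n-3)/2}\exp\big(n\sqrt{Ps}\,u\big)\,\mathrm{d}u, \] and define \[ L(P,s)=\frac{(2Ps)^2}{\sqrt{2\pi}}\cdot\sqrt{\frac{1+4Ps-\sqrt{1+4Ps}}{(\sqrt{1+4Ps}-1)^5}}. \] Then \[ \limsup_{n\to\infty}\frac{1}{\sqrt{n}}\sup_{u\in[-1,1]}f_{U|\mathcal{E}}(u)\le L(P,s). \]
   Context: Here $\exp$ denotes the natural exponential. (In the paper, $f_{U|\mathcal{E}}$ arises as the conditional density of $U=\cos\Psi$, where $\Psi$ is the angle of a standard Gaussian vector $\mathbf{Z}\in\mathbb{R}^n$ conditioned on $\|\mathbf{x}_0+\mathbf{Z}\|_2^2=ns$ with $\mathbf{x}_0=(\sqrt{nP},0,\dots,0)$; the lemma concerns only the explicit density above.) *)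

theory Defs
  imports "HOL-Analysis.Analysis"
begin

text \<open>Weight (1-u^2)^((n-3)/2), written as sqrt(1-u^2) to the integer power n-3
  (so that the value at u = +-1 for n = 3 is 1, as in ordinary mathematics).\<close>
definition wU :: "real \<Rightarrow> real \<Rightarrow> nat \<Rightarrow> real \<Rightarrow> real" where
  "wU P s n u = sqrt (1 - u\<^sup>2) powi (int n - 3) * exp (real n * sqrt (P * s) * u)"

definition FU :: "real \<Rightarrow> real \<Rightarrow> nat \<Rightarrow> real" where
  "FU P s n = integral {-1..1} (\<lambda>u. wU P s n u)"

definition fU :: "real \<Rightarrow> real \<Rightarrow> nat \<Rightarrow> real \<Rightarrow> real" where
  "fU P s n u = (if u \<in> {-1..1} then wU P s n u / FU P s n else 0)"

definition LPs :: "real \<Rightarrow> real \<Rightarrow> real" where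
  "LPs P s = (2 * P * s)\<^sup>2 / sqrt (2 * pi) *
     sqrt ((1 + 4 * P * s - sqrt (1 + 4 * P * s)) / (sqrt (1 + 4 * P * s) - 1) ^ 5)"

end

theory Submission
  imports Defs "HOL-Probability.Probability" "HOL-Real_Asymp.Real_Asymp"
begin

lemma gauss_lim: "((\<lambda>R. integral {-R..R} (\<lambda>x. exp(-x\<^sup>2/2))) \<longlongrightarrow> sqrt(2*pi)) at_top"
proof -
  let ?g = "std_normal_density"
  have si: "set_integrable lborel {-R..R} ?g" for R
    unfolding set_integrable_def
    by (rule integrable_mult_indicator) auto
  have eq: "integral {-R..R} (\<lambda>x. exp(-x\<^sup>2/2)) = sqrt(2*pi) * (LINT x:{-R..R}|lborel. ?g x)" for R
  proof -
    have "(LINT x:{-R..R}|lborel. ?g x) = integral {-R..R} ?g"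
      by (rule set_borel_integral_eq_integral(2)[OF si])
    also have "\<dots> = integral {-R..R} (\<lambda>x. (1 / sqrt (2 * pi)) * exp (- x\<^sup>2 / 2))"
      by (rule arg_cong[where f="integral {-R..R}"], rule ext, rule std_normal_density_def)
    also have "\<dots> = (1 / sqrt (2 * pi)) * integral {-R..R} (\<lambda>x. exp (- x\<^sup>2 / 2))"
      by simp
    finally show ?thesis by simp
  qed
  have lim: "((\<lambda>R. LINT x:{-R..R}|lborel. ?g x) \<longlongrightarrow> integral\<^sup>L lborel ?g) at_top"
    unfolding set_lebesgue_integral_def
  proof (rule integral_dominated_convergence_at_top[where w = ?g])
    show "AE x in lborel. ((\<lambda>i. indicator {-i..i} x *\<^sub>R ?g x) \<longlongrightarrow> ?g x) at_top"
    proof (rule AE_I2)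
      fix x :: real
      have "eventually (\<lambda>i. indicator {-i..i} x *\<^sub>R ?g x = ?g x) at_top"
        using eventually_ge_at_top[of "\<bar>x\<bar>"] by eventually_elim (auto simp: indicator_def)
      then show "((\<lambda>i. indicator {-i..i} x *\<^sub>R ?g x) \<longlongrightarrow> ?g x) at_top"
        by (rule tendsto_eventually)
    qed
    show "\<forall>\<^sub>F i in at_top. AE x in lborel. norm (indicator {-i..i} x *\<^sub>R ?g x) \<le> ?g x"
      by (auto simp: indicator_def)
  qed auto
  have "((\<lambda>R. sqrt(2*pi) * (LINT x:{-R..R}|lborel. ?g x)) \<longlongrightarrow> sqrt(2*pi) * 1) at_top"
    using lim by (intro tendsto_mult) auto
  then show ?thesis using eq by simp
qed


lemma psi_upper:
  fixes r a c u :: real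
  assumes "r \<ge> 0" "c\<^sup>2 < 1" "u\<^sup>2 < 1" "a*(1-c\<^sup>2) = r*c"
  shows "r*ln(1-u\<^sup>2)/2 + a*u \<le> r*ln(1-c\<^sup>2)/2 + a*c"
proof -
  have p1: "1-c\<^sup>2 > 0" "1-u\<^sup>2>0" using assms by auto
  have "ln(1-u\<^sup>2) - ln(1-c\<^sup>2) = ln((1-u\<^sup>2)/(1-c\<^sup>2))" using p1 by (simp add: ln_div)
  also have "\<dots> \<le> (1-u\<^sup>2)/(1-c\<^sup>2) - 1" by (rule ln_le_minus_one) (use p1 in auto)
  finally have l: "ln(1-u\<^sup>2) - ln(1-c\<^sup>2) \<le> (1-u\<^sup>2)/(1-c\<^sup>2) - 1" .
  have a: "a = r*c/(1-c\<^sup>2)" using assms(4) p1 by (simp add: field_simps)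
  have e: "r*((1-u\<^sup>2)/(1-c\<^sup>2)-1)/2 + a*(u-c) = - r*(u-c)\<^sup>2/(2*(1-c\<^sup>2))"
    unfolding a using p1 by (simp add: divide_simps) (simp add: power2_eq_square algebra_simps)
  have "r*(ln(1-u\<^sup>2) - ln(1-c\<^sup>2)) \<le> r*((1-u\<^sup>2)/(1-c\<^sup>2) - 1)"
    using l assms(1) by (simp add: mult_left_mono)
  then have M: "r*ln(1-u\<^sup>2) - r*ln(1-c\<^sup>2) \<le> r*((1-u\<^sup>2)/(1-c\<^sup>2) - 1)" by (simp add: right_diff_distrib)
  have "- r*(u-c)\<^sup>2/(2*(1-c\<^sup>2)) \<le> 0" using p1 assms(1) by (simp add: divide_nonpos_pos)
  have gen: "x1 - x2 \<le> y \<Longrightarrow> y/2 + a*(u-c) = q \<Longrightarrow> q \<le> 0 \<Longrightarrow> x1/2 + a*u \<le> x2/2 + a*c"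
    for x1 x2 y q :: real by (simp add: algebra_simps)
  show ?thesis by (rule gen[OF M e]) fact
qed

lemma psi_lower:
  fixes r a c u :: real
  assumes "r \<ge> 0" "c\<^sup>2 < 1" "u\<^sup>2 < 1" "a*(1-c\<^sup>2) = r*c"
  shows "r*ln(1-u\<^sup>2)/2 + a*u \<ge> r*ln(1-c\<^sup>2)/2 + a*c
           - r*(u-c)\<^sup>2*(1+c\<^sup>2+2*c*u)/(2*(1-c\<^sup>2)*(1-u\<^sup>2))"
proof -
  have p1: "1-c\<^sup>2 > 0" "1-u\<^sup>2>0" using assms by auto
  have "ln(1-c\<^sup>2) - ln(1-u\<^sup>2) = ln((1-c\<^sup>2)/(1-u\<^sup>2))" using p1 by (simp add: ln_div)
  also have "\<dots> \<le> (1-c\<^sup>2)/(1-u\<^sup>2) - 1" by (rule ln_le_minus_one) (use p1 in auto)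
  finally have l: "ln(1-u\<^sup>2) - ln(1-c\<^sup>2) \<ge> 1 - (1-c\<^sup>2)/(1-u\<^sup>2)" by simp
  have a: "a = r*c/(1-c\<^sup>2)" using assms(4) p1 by (simp add: field_simps)
  have e: "r*(1 - (1-c\<^sup>2)/(1-u\<^sup>2))/2 + a*(u-c) = - r*(u-c)\<^sup>2*(1+c\<^sup>2+2*c*u)/(2*(1-c\<^sup>2)*(1-u\<^sup>2))"
    unfolding a using p1 by (simp add: field_simps power2_eq_square)
  have "r*(ln(1-u\<^sup>2) - ln(1-c\<^sup>2)) \<ge> r*(1 - (1-c\<^sup>2)/(1-u\<^sup>2))"
    using l assms(1) by (simp add: mult_left_mono)
  then have M: "r*ln(1-u\<^sup>2) - r*ln(1-c\<^sup>2) \<ge> r*(1 - (1-c\<^sup>2)/(1-u\<^sup>2))" by (simp add: right_diff_distrib)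
  have gen: "y \<le> x1 - x2 \<Longrightarrow> y/2 + a*(u-c) = - q \<Longrightarrow> x1/2 + a*u \<ge> x2/2 + a*c - q"
    for x1 x2 y q :: real by (simp add: algebra_simps)
  show ?thesis by (rule gen[OF M]) (use e in simp)
qed
lemma c_props:
  fixes a r :: real
  assumes "a > 0" "r > 0"
  defines "c \<equiv> (sqrt(r\<^sup>2+4*a\<^sup>2) - r)/(2*a)"
  shows "0 < c" "c < 1" "a*(1-c\<^sup>2) = r*c"
proof -
  let ?q = "sqrt(r\<^sup>2+4*a\<^sup>2)"
  have q2: "?q\<^sup>2 = r\<^sup>2+4*a\<^sup>2" by simp
  have "r = sqrt(r\<^sup>2)" using assms by simp
  also have "\<dots> < ?q" using assms by (intro real_sqrt_less_mono) simp
  finally have qr: "r < ?q" .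
  then show "0 < c" unfolding c_def using assms by simp
  have "?q < sqrt((r+2*a)\<^sup>2)" using assms by (intro real_sqrt_less_mono) (simp add: power2_eq_square algebra_simps)
  also have "\<dots> = r + 2*a" using assms by simp
  finally have "?q < r+2*a" .
  then show "c < 1" unfolding c_def using assms by (simp add: field_simps)
  show "a*(1-c\<^sup>2) = r*c" unfolding c_def using assms q2
    by (simp add: field_simps power2_eq_square)
qed

lemma wU_exp:
  fixes P s u :: real and n :: nat
  assumes "n \<ge> 3" "u\<^sup>2 < 1"
  shows "wU P s n u = exp (real n * (((real n - 3)/real n) * ln(1-u\<^sup>2)/2 + sqrt (P * s) * u))"
proof -
  have p: "1 - u\<^sup>2 > 0" using assms by simp
  have "int n - 3 = int (n-3)" using assms by simp
  then have "sqrt (1 - u\<^sup>2) powi (int n - 3) = sqrt(1-u\<^sup>2) ^ (n-3)" by (metis power_int_of_nat)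
  also have "\<dots> = exp (ln (sqrt(1-u\<^sup>2) ^ (n-3)))" using p by simp
  also have "\<dots> = exp (real (n-3) * (ln(1-u\<^sup>2)/2))" using p by (simp add: ln_realpow ln_sqrt)
  finally have e: "sqrt (1 - u\<^sup>2) powi (int n - 3) = exp (real (n-3) * (ln(1-u\<^sup>2)/2))" .
  have "real n * (((real n - 3)/real n) * ln(1-u\<^sup>2)/2 + sqrt (P * s) * u)
        = real (n-3) * (ln(1-u\<^sup>2)/2) + real n * sqrt (P * s) * u"
  proof -
    have "real n > 0" using assms by simp
    then show ?thesis using assms by (simp add: of_nat_diff field_simps)
  qed
  then show ?thesis unfolding wU_def e by (simp add: exp_add)
qed

lemma wU_end:
  fixes P s u :: real and n :: nat
  assumes "n \<ge> 4" "u\<^sup>2 = 1"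
  shows "wU P s n u = 0"
proof -
  have "int n - 3 = int (n-3)" using assms by simp
  moreover have "n - 3 \<noteq> 0" using assms by simp
  ultimately show ?thesis unfolding wU_def using assms by (metis power_int_of_nat power_0_left real_sqrt_zero diff_self mult_zero_left)
qed

lemma wU_pow:
  assumes "n \<ge> 3"
  shows "wU P s n u = sqrt(1-u\<^sup>2) ^ (n-3) * exp (real n * sqrt (P * s) * u)"
proof -
  have "int n - 3 = int (n-3)" using assms by simp
  then show ?thesis unfolding wU_def by (metis power_int_of_nat)
qed

lemma bound_n:
  fixes P s \<delta> :: real and n :: nat
  assumes P: "P>0" and s: "s>0" and n4: "n\<ge>4" and dp: "\<delta>>0"
  defines "a \<equiv> sqrt (P * s)"
  defines "r \<equiv> (real n - 3)/real n"
  defines "c \<equiv> (sqrt(r\<^sup>2+4*a\<^sup>2) - r)/(2*a)"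
  defines "K \<equiv> (1+3*c\<^sup>2+2*\<delta>)/((1-c\<^sup>2)*(1-(c+\<delta>)\<^sup>2))"
  defines "S \<equiv> sqrt((real n - 3)*K)"
  assumes cd: "c+\<delta><1"
  shows "(SUP u\<in>{-1..1::real}. ereal (fU P s n u)) \<le> ereal (S / integral {-(\<delta>*S)..\<delta>*S} (\<lambda>x. exp(-x\<^sup>2/2)))"
proof -
  have a: "a > 0" unfolding a_def using P s by simp
  have r: "r > 0" unfolding r_def using n4 by simp
  have c0: "0 < c" and c1: "c < 1" and ceq: "a*(1-c\<^sup>2) = r*c"
    using c_props[OF a r] unfolding c_def by auto
  have c2: "c\<^sup>2 < 1" using c0 c1 by (simp add: power2_eq_square) (metis c1 le_less_trans mult_left_le_one_le mult_nonneg_nonneg less_imp_le)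
  define \<psi> where "\<psi> u = r*ln(1-u\<^sup>2)/2 + a*u" for u
  define W where "W = exp(real n * \<psi> c)"
  have Wp: "W > 0" unfolding W_def by simp
  have D1: "1-c\<^sup>2 > 0" using c2 by simp
  have cdp: "0 < c+\<delta>" using c0 dp by simp
  have D2: "1-(c+\<delta>)\<^sup>2 > 0" using cd cdp by (simp add: power2_eq_square) (metis cd le_less_trans mult_left_le_one_le less_imp_le)
  have Np: "1+3*c\<^sup>2+2*\<delta> > 0" using dp zero_le_power2[of c] by linarith
  have Kp: "K > 0" unfolding K_def using D1 D2 Np by (intro divide_pos_pos mult_pos_pos) auto
  have m: "real n - 3 > 0" using n4 by simp
  have Sp: "S > 0" unfolding S_def using Kp m by simp
  have S2: "S\<^sup>2 = (real n - 3)*K" unfolding S_def using Kp m by simp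
  have nr: "real n * r = real n - 3" unfolding r_def using n4 by simp
  have wexp: "wU P s n u = exp(real n * \<psi> u)" if "u\<^sup>2 < 1" for u
    using wU_exp[of n u P s] that n4 unfolding \<psi>_def r_def a_def by simp
  have wnn: "0 \<le> wU P s n u" if "u \<in> {-1..1}" for u
  proof -
    have "u\<^sup>2 \<le> 1" using that by (auto simp: abs_square_le_1)
    then show ?thesis using n4 by (simp add: wU_pow) 
  qed
  have cont: "continuous_on A (wU P s n)" for A
  proof -
    have "wU P s n = (\<lambda>u. sqrt(1-u\<^sup>2) ^ (n-3) * exp (real n * sqrt (P * s) * u))"
      using n4 by (intro ext wU_pow) simp
    then show ?thesis by (simp add: continuous_intros)
  qed
  have up: "wU P s n u \<le> W" if "u \<in> {-1..1}" for u
  proof (cases "u\<^sup>2 < 1")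
    case True
    have "\<psi> u \<le> \<psi> c" unfolding \<psi>_def using psi_upper[of r c u a] r c2 True ceq by simp
    then show ?thesis unfolding W_def wexp[OF True] by (simp add: mult_left_mono)
  next
    case False
    moreover have "u\<^sup>2 \<le> 1" using that by (auto simp: abs_square_le_1)
    ultimately have "u\<^sup>2 = 1" by simp
    then show ?thesis using wU_end[OF n4] Wp by (simp add: less_imp_le)
  qed
  have low: "W * exp(-(S*u + -(S*c))\<^sup>2/2) \<le> wU P s n u" if u: "u \<in> {c-\<delta>..c+\<delta>}" for u
  proof -
    have ub: "\<bar>u\<bar> \<le> c+\<delta>" using u c0 dp by auto
    have u2le: "u\<^sup>2 \<le> (c+\<delta>)\<^sup>2" using ub by (metis abs_le_square_iff abs_of_pos cdp)
    have u2: "u\<^sup>2 < 1" using u2le D2 by simp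
    have D1': "1-u\<^sup>2 > 0" using u2 by simp
    define X where "X = (1+c\<^sup>2+2*c*u)/((1-c\<^sup>2)*(1-u\<^sup>2))"
    have N: "1+c\<^sup>2+2*c*u \<le> 1+3*c\<^sup>2+2*\<delta>"
    proof -
      have "c*u \<le> c*(c+\<delta>)" using u c0 by (intro mult_left_mono) auto
      also have "\<dots> \<le> c\<^sup>2 + \<delta>" using c1 dp by (simp add: power2_eq_square algebra_simps)
      finally show ?thesis by simp
    qed
    have XK: "X \<le> K"
    proof -
      have "X \<le> (1+3*c\<^sup>2+2*\<delta>)/((1-c\<^sup>2)*(1-u\<^sup>2))"
        unfolding X_def using N D1 D1' by (intro divide_right_mono) auto
      also have "\<dots> \<le> K" unfolding K_def
        using D1 D2 D1' u2le Np by (intro divide_left_mono mult_left_mono mult_pos_pos) auto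
      finally show ?thesis .
    qed
    have pl: "\<psi> u \<ge> \<psi> c - r*(u-c)\<^sup>2*X/2"
      using psi_lower[of r c u a] r c2 u2 ceq unfolding \<psi>_def X_def by (simp add: field_simps)
    have "r*(u-c)\<^sup>2*X/2 \<le> r*(u-c)\<^sup>2*K/2" using XK r by (simp add: mult_left_mono)
    then have "real n * \<psi> c - real n * (r*(u-c)\<^sup>2*K/2) \<le> real n * \<psi> u"
      using pl by (smt (verit) mult_left_mono of_nat_0_le_iff right_diff_distrib)
    moreover have "real n * (r*(u-c)\<^sup>2*K/2) = (S*u + -(S*c))\<^sup>2/2"
    proof -
      have "(S*u + -(S*c))\<^sup>2 = S\<^sup>2 * (u-c)\<^sup>2" by (simp add: power2_eq_square algebra_simps)
      moreover have "real n * (r*(u-c)\<^sup>2*K/2) = (real n * r)*K*(u-c)\<^sup>2/2" by (simp add: algebra_simps)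
      ultimately show ?thesis unfolding nr S2[symmetric] by simp
    qed
    ultimately have "real n * \<psi> c - (S*u + -(S*c))\<^sup>2/2 \<le> real n * \<psi> u" by simp
    then have "exp (real n * \<psi> c - (S*u + -(S*c))\<^sup>2/2) \<le> exp (real n * \<psi> u)" by simp
    moreover have "W * exp(-(S*u + -(S*c))\<^sup>2/2) = exp (real n * \<psi> c - (S*u + -(S*c))\<^sup>2/2)"
      unfolding W_def mult_exp_exp by simp
    ultimately show ?thesis unfolding wexp[OF u2] by simp
  qed
  define \<Phi> where "\<Phi> = integral {-(\<delta>*S)..\<delta>*S} (\<lambda>x::real. exp(-x\<^sup>2/2))"
  have gint: "(\<lambda>x::real. exp(-x\<^sup>2/2)) integrable_on {-(\<delta>*S)..\<delta>*S}"
    by (intro integrable_continuous_interval continuous_intros) auto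
  have hi: "((\<lambda>u. exp(-(S*u + -(S*c))\<^sup>2/2)) has_integral \<Phi> / S) {c-\<delta>..c+\<delta>}"
  proof -
    have "((\<lambda>x::real. exp(-x\<^sup>2/2)) has_integral \<Phi>) (cbox (-(\<delta>*S)) (\<delta>*S))"
      using gint unfolding \<Phi>_def by (simp add: has_integral_integral)
    from has_integral_affinity'[OF this Sp, of "-(S*c)"]
    have "((\<lambda>u. exp(-(S*u + -(S*c))\<^sup>2/2)) has_integral inverse S * \<Phi>)
            {inverse S * (S*c - \<delta>*S)..inverse S * (\<delta>*S + S*c)}" by simp
    moreover have "inverse S * (S*c - \<delta>*S) = c-\<delta>" "inverse S * (\<delta>*S + S*c) = c+\<delta>"
       "inverse S * \<Phi> = \<Phi> / S"
      using Sp by (simp_all add: field_simps)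
    ultimately show ?thesis by simp
  qed
  have Phip: "\<Phi> > 0"
  proof -
    have "((\<lambda>x::real. exp(-(\<delta>*S)\<^sup>2/2)) has_integral exp(-(\<delta>*S)\<^sup>2/2) * (2*(\<delta>*S))) {-(\<delta>*S)..\<delta>*S}"
    proof -
      have "Henstock_Kurzweil_Integration.content {-(\<delta>*S)..\<delta>*S} = 2*(\<delta>*S)" using dp Sp by simp
      then show ?thesis
        using has_integral_const_real[of "exp(-(\<delta>*S)\<^sup>2/2)" "-(\<delta>*S)" "\<delta>*S"] by (simp add: mult.commute)
    qed
    moreover have "((\<lambda>x::real. exp(-x\<^sup>2/2)) has_integral \<Phi>) {-(\<delta>*S)..\<delta>*S}"
      using gint unfolding \<Phi>_def by (simp add: has_integral_integral)
    moreover have "exp(-(\<delta>*S)\<^sup>2/2) \<le> exp(-x\<^sup>2/2)" if "x \<in> {-(\<delta>*S)..\<delta>*S}" for x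
    proof -
      have "\<bar>x\<bar> \<le> \<delta>*S" using that by auto
      then have "x\<^sup>2 \<le> (\<delta>*S)\<^sup>2" by (metis abs_le_square_iff abs_of_pos dp Sp mult_pos_pos)
      then show ?thesis by simp
    qed
    ultimately have "exp(-(\<delta>*S)\<^sup>2/2) * (2*(\<delta>*S)) \<le> \<Phi>" by (rule has_integral_le)
    moreover have "exp(-(\<delta>*S)\<^sup>2/2) * (2*(\<delta>*S)) > 0" using dp Sp by simp
    ultimately show ?thesis by linarith
  qed
  have F: "W * (\<Phi> / S) \<le> FU P s n"
  proof -
    have sub: "{c-\<delta>..c+\<delta>} \<subseteq> {-1..1}" using c0 dp cd by auto
    have "W * (\<Phi> / S) = integral {c-\<delta>..c+\<delta>} (\<lambda>u. W * exp(-(S*u + -(S*c))\<^sup>2/2))"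
      by (rule integral_unique[OF has_integral_mult_right[OF hi, of W], symmetric])
    also have "\<dots> \<le> integral {c-\<delta>..c+\<delta>} (wU P s n)"
    proof (rule integral_le)
      show "(\<lambda>u. W * exp(-(S*u + -(S*c))\<^sup>2/2)) integrable_on {c-\<delta>..c+\<delta>}"
        using has_integral_mult_right[OF hi, of W] by (auto simp: integrable_on_def)
      show "wU P s n integrable_on {c-\<delta>..c+\<delta>}" by (rule integrable_continuous_interval[OF cont])
      show "\<And>x. x \<in> {c-\<delta>..c+\<delta>} \<Longrightarrow> W * exp(-(S*x + -(S*c))\<^sup>2/2) \<le> wU P s n x" by (rule low)
    qed
    also have "\<dots> \<le> integral {-1..1} (wU P s n)"
      using sub wnn by (intro integral_subset_le integrable_continuous_interval cont) auto
    finally show ?thesis unfolding FU_def .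
  qed
  have "W * (\<Phi> / S) > 0" using Wp Phip Sp by simp
  then have Fp: "FU P s n > 0" using F by linarith
  show ?thesis
  proof (rule SUP_least)
    fix u :: real assume u: "u \<in> {-1..1}"
    have "fU P s n u = wU P s n u / FU P s n" using u unfolding fU_def by simp
    also have "\<dots> \<le> W / FU P s n" using up[OF u] Fp by (simp add: divide_right_mono)
    also have "\<dots> \<le> W / (W * (\<Phi> / S))" using F Wp Phip Sp Fp by (intro divide_left_mono) auto
    also have "\<dots> = S / \<Phi>" using Wp Phip Sp by simp
    finally show "ereal (fU P s n u) \<le> ereal (S / integral {-(\<delta>*S)..\<delta>*S} (\<lambda>x. exp(-x\<^sup>2/2)))"
      unfolding \<Phi>_def by simp
  qed
qed



lemma final_ineq:
  fixes P s :: real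
  assumes P: "P > 0" and s: "s > 0"
  defines "a \<equiv> sqrt (P * s)"
  defines "t \<equiv> sqrt (1 + 4*a\<^sup>2)"
  defines "u0 \<equiv> (t-1)/(2*a)"
  defines "K0 \<equiv> (1+3*u0\<^sup>2)/((1-u0\<^sup>2)*(1-u0\<^sup>2))"
  shows "sqrt K0 / sqrt (2*pi) \<le> LPs P s"
proof -
  have a: "a > 0" unfolding a_def using P s by simp
  have a2: "a\<^sup>2 = P * s" unfolding a_def using P s by simp
  have t2: "t\<^sup>2 = 1 + 4*a\<^sup>2" unfolding t_def by simp
  have t1: "t > 1" unfolding t_def using a by simp
  have t0: "t > 0" using t1 by simp
  have fa: "4*a\<^sup>2 = (t-1)*(t+1)" using t2 by (simp add: algebra_simps power2_eq_square)
  have u2: "u0\<^sup>2 = (t-1)/(t+1)"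
  proof -
    have "u0\<^sup>2 = (t-1)\<^sup>2/(4*a\<^sup>2)" unfolding u0_def by (simp add: power_divide power_mult_distrib)
    also have "\<dots> = (t-1)/(t+1)" unfolding fa using t1
      by (metis (no_types) power2_eq_square mult_divide_mult_cancel_left_if less_irrefl right_minus_eq)
    finally show ?thesis .
  qed
  have K0e: "K0 = (2*t-1)*(t+1)/2"
    unfolding K0_def u2 using t1 by (simp add: field_simps)
  have Le: "LPs P s = (t+1)\<^sup>2 * sqrt t / (4 * sqrt (2*pi))"
  proof -
    have st: "sqrt (1 + 4*P * s) = t" unfolding t_def a2 by (simp add: mult.assoc)
    have "1 + 4*P * s = t\<^sup>2" using t2 a2 by (simp add: mult.assoc)
    then have n1: "1 + 4 * P * s - sqrt (1 + 4 * P * s) = (t-1) * t" unfolding st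
      by (simp add: power2_eq_square algebra_simps)
    have n2: "(sqrt (1 + 4 * P * s) - 1) ^ 5 = (t-1) * ((t-1)\<^sup>2)\<^sup>2" unfolding st
      by (simp add: eval_nat_numeral)
    have tn: "t - 1 \<noteq> 0" using t1 by simp
    have e1: "(1 + 4 * P * s - sqrt (1 + 4 * P * s)) / (sqrt (1 + 4 * P * s) - 1) ^ 5
        = t / ((t-1)\<^sup>2)\<^sup>2" unfolding n1 n2 using tn by simp
    have "sqrt (((t-1)\<^sup>2)\<^sup>2) = (t-1)\<^sup>2" by (simp only: real_sqrt_abs abs_power2)
    then have e2: "sqrt (t / ((t-1)\<^sup>2)\<^sup>2) = sqrt t / (t-1)\<^sup>2" by (simp only: real_sqrt_divide)
    have h: "2*P * s = (t-1)*(t+1)/2" using fa a2 by (simp add: mult.assoc)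
    then have e3: "(2*P * s)\<^sup>2 = ((t-1)*(t+1)/2)\<^sup>2" by (simp only:)
    have e4: "((t-1)*(t+1)/2)\<^sup>2 = (t-1)\<^sup>2 * (t+1)\<^sup>2 / 4" by (simp add: power_mult_distrib power_divide)
    have gen: "X \<noteq> 0 \<Longrightarrow> Z > 0 \<Longrightarrow> X*Y/4/Z*(W/X) = Y*W/(4*Z)" for X Y Z W :: real
      by (simp add: field_simps)
    show ?thesis unfolding LPs_def e1 e2 e3 e4 using t1
      by (intro gen) auto
  qed
  have poly: "8*(2*t-1) \<le> (t+1)^3*t"
  proof -
    define e where "e = t - 1"
    have e0: "e \<ge> 0" unfolding e_def using t1 by simp
    have "(t+1)^3*t - 8*(2*t-1) = 4*e + 18*e\<^sup>2 + 7*e^3 + e^4"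
      unfolding e_def by (simp add: algebra_simps eval_nat_numeral)
    moreover have "4*e + 18*e\<^sup>2 + 7*e^3 + e^4 \<ge> 0" using e0 by simp
    ultimately show ?thesis by simp
  qed
  have "K0 \<le> ((t+1)\<^sup>2 * sqrt t / 4)\<^sup>2"
  proof -
    have "((t+1)\<^sup>2 * sqrt t / 4)\<^sup>2 = (t+1)^4 * t / 16" using t0
      by (simp add: power_mult_distrib power_divide)
    moreover have "(2*t-1)*(t+1)/2 \<le> (t+1)^4 * t / 16"
    proof -
      have "8*(2*t-1)*(t+1) \<le> (t+1)^3*t*(t+1)" using poly t1 by (intro mult_right_mono) auto
      then show ?thesis by (simp add: eval_nat_numeral algebra_simps)
    qed
    ultimately show ?thesis using K0e by linarith
  qed
  then have "sqrt K0 \<le> (t+1)\<^sup>2 * sqrt t / 4"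
    using t0 by (metis real_sqrt_le_mono real_sqrt_abs abs_of_nonneg divide_nonneg_nonneg mult_nonneg_nonneg zero_le_power2 real_sqrt_ge_zero less_imp_le zero_le_numeral)
  then have "sqrt K0 / sqrt (2*pi) \<le> ((t+1)\<^sup>2 * sqrt t / 4) / sqrt (2*pi)"
    by (rule divide_right_mono) simp
  then show ?thesis unfolding Le by simp
qed


theorem lemma1:
  fixes P s :: real
  assumes "P > 0" and "s > 0"
  shows "limsup (\<lambda>n::nat. ereal (1 / sqrt (real n)) * (SUP u\<in>{-1..1::real}. ereal (fU P s n u)))
           \<le> ereal (LPs P s)"
proof -
  note P = assms(1) and s = assms(2)
  define a where "a = sqrt (P * s)"
  have a: "a > 0" unfolding a_def using P s by simp
  define r where "r n = (real n - 3)/real n" for n :: nat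
  define c where "c n = (sqrt((r n)\<^sup>2+4*a\<^sup>2) - r n)/(2*a)" for n
  define \<delta> where "\<delta> n = 1/sqrt(sqrt(real n))" for n :: nat
  define K where "K n = (1+3*(c n)\<^sup>2+2*\<delta> n)/((1-(c n)\<^sup>2)*(1-(c n+\<delta> n)\<^sup>2))" for n
  define S where "S n = sqrt((real n - 3)*K n)" for n
  define G where "G R = integral {-R..R} (\<lambda>x::real. exp(-x\<^sup>2/2))" for R
  define B where "B n = sqrt(r n * K n) / G(\<delta> n * S n)" for n
  define t where "t = sqrt (1 + 4*a\<^sup>2)"
  define u0 where "u0 = (t-1)/(2*a)"
  define K0 where "K0 = (1+3*u0\<^sup>2)/((1-u0\<^sup>2)*(1-u0\<^sup>2))"
  have u0: "0 < u0" "u0 < 1"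
    using c_props[OF a, of 1] unfolding u0_def t_def by simp_all
  have D0: "1 - u0\<^sup>2 > 0" using u0 by (simp add: power2_eq_square) (metis less_imp_le mult_left_le_one_le le_less_trans)
  have K0p: "K0 > 0" unfolding K0_def using D0 by (intro divide_pos_pos mult_pos_pos) (auto intro: add_pos_nonneg)
  have r_lim: "r \<longlonglongrightarrow> 1" unfolding r_def by real_asymp
  have d_lim: "\<delta> \<longlonglongrightarrow> 0" unfolding \<delta>_def by real_asymp
  have c_lim: "c \<longlonglongrightarrow> u0"
  proof -
    have "(\<lambda>n. (sqrt((r n)\<^sup>2+4*a\<^sup>2) - r n)/(2*a)) \<longlonglongrightarrow> (sqrt(1\<^sup>2+4*a\<^sup>2) - 1)/(2*a)"
      using a by (intro tendsto_intros r_lim) auto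
    then show ?thesis unfolding c_def[abs_def] u0_def t_def by simp
  qed
  have K_lim: "K \<longlonglongrightarrow> K0"
  proof -
    have "(\<lambda>n. (1+3*(c n)\<^sup>2+2*\<delta> n)/((1-(c n)\<^sup>2)*(1-(c n+\<delta> n)\<^sup>2)))
           \<longlonglongrightarrow> (1+3*u0\<^sup>2+2*0)/((1-u0\<^sup>2)*(1-(u0+0)\<^sup>2))"
      using D0 by (intro tendsto_intros c_lim d_lim) auto
    then show ?thesis unfolding K_def[abs_def] K0_def by simp
  qed
  have rK_lim: "(\<lambda>n. sqrt(r n * K n)) \<longlonglongrightarrow> sqrt K0"
    using tendsto_real_sqrt[OF tendsto_mult[OF r_lim K_lim]] by simp
  have dS: "filterlim (\<lambda>n. \<delta> n * S n) at_top sequentially"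
  proof -
    have "filterlim (\<lambda>n::nat. sqrt((real n - 3)/sqrt(sqrt(real n))^2)) at_top sequentially"
      by real_asymp
    then have "filterlim (\<lambda>n. sqrt (K n) * sqrt((real n - 3)/sqrt(sqrt(real n))^2)) at_top sequentially"
      using K0p by (intro filterlim_tendsto_pos_mult_at_top[OF tendsto_real_sqrt[OF K_lim]]) auto
    moreover have "sqrt (K n) * sqrt((real n - 3)/sqrt(sqrt(real n))^2) = \<delta> n * S n" for n
      unfolding \<delta>_def S_def by (simp add: real_sqrt_mult real_sqrt_divide)
    ultimately show ?thesis by simp
  qed
  have G_lim: "(\<lambda>n. G (\<delta> n * S n)) \<longlonglongrightarrow> sqrt (2*pi)"
    unfolding G_def by (rule filterlim_compose[OF gauss_lim dS])
  have B_lim: "B \<longlonglongrightarrow> sqrt K0 / sqrt (2*pi)"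
    unfolding B_def[abs_def] by (intro tendsto_intros rK_lim G_lim) simp
  have ev: "eventually (\<lambda>n. n \<ge> 4 \<and> c n + \<delta> n < 1) sequentially"
  proof -
    have "(\<lambda>n. c n + \<delta> n) \<longlonglongrightarrow> u0 + 0" by (intro tendsto_intros c_lim d_lim)
    then have "eventually (\<lambda>n. c n + \<delta> n < 1) sequentially" using u0 by (intro order_tendstoD(2)) auto
    moreover have "eventually (\<lambda>n::nat. n \<ge> 4) sequentially" by (rule eventually_ge_at_top)
    ultimately show ?thesis by eventually_elim auto
  qed
  have bnd: "eventually (\<lambda>n. ereal (1 / sqrt (real n)) * (SUP u\<in>{-1..1::real}. ereal (fU P s n u)) \<le> ereal (B n)) sequentially"
    using ev
  proof eventually_elim
    case (elim n)
    then have n4: "n \<ge> 4" and cd: "c n + \<delta> n < 1" by auto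
    have dp: "\<delta> n > 0" unfolding \<delta>_def using n4 by simp
    have "(SUP u\<in>{-1..1::real}. ereal (fU P s n u)) \<le> ereal (S n / G (\<delta> n * S n))"
      using bound_n[OF P s n4 dp] cd unfolding S_def K_def c_def r_def a_def G_def by simp
    then have "ereal (1 / sqrt (real n)) * (SUP u\<in>{-1..1::real}. ereal (fU P s n u))
        \<le> ereal (1 / sqrt (real n)) * ereal (S n / G (\<delta> n * S n))"
      by (rule ereal_mult_left_mono) simp
    also have "\<dots> = ereal (B n)"
    proof -
      have "S n / sqrt (real n) = sqrt (r n * K n)" unfolding S_def r_def
        by (simp add: real_sqrt_mult real_sqrt_divide)
      then show ?thesis unfolding B_def by (simp add: field_simps) 
    qed
    finally show ?case .
  qed
  have "limsup (\<lambda>n::nat. ereal (1 / sqrt (real n)) * (SUP u\<in>{-1..1::real}. ereal (fU P s n u)))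
        \<le> limsup (\<lambda>n. ereal (B n))" by (rule Limsup_mono[OF bnd])
  also have "\<dots> = ereal (sqrt K0 / sqrt (2*pi))"
    by (rule lim_imp_Limsup) (auto intro: B_lim)
  also have "\<dots> \<le> ereal (LPs P s)"
    using final_ineq[OF P s] unfolding K0_def u0_def t_def a_def by simp
  finally show ?thesis .
qed

end
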